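(* Let $(F\colon\mathcal C\to\mathcal D,U\colon\mathcal D\to\mathcal C)$ be a comonoidal adjunction between left (resp. right) closed monoidal categories. Then $(F,U)$ is a left (resp. right) Hopf adjunction if and only if $U$ (viewed as a strong monoidal functor) is left (resp. right) closed.
   Context: Monoidal categories are strict. A comonoidal adjunction is an adjunction $(F,U)$ with unit $\eta$, counit $\varepsilon$ between monoidal categories where $F,U$ are comonoidal functors (structure $F_2(X,Y)\colon F(X\otimes Y)\to FX\otimes FY$, $F_0\colon F\mathbb 1\to\mathbb 1$) and $\eta,\varepsilon$ are comonoidal; then $U$ is strong comonoidal, hence strong monoidal via the inverse structure maps. Hopf operators: $\mathbb H^l_{c,d}=(Fc\otimes\varepsilon_d)F_2(c,Ud)\colon F(c\otimes Ud)\to Fc\otimes d$, $\mathbb H^r_{d,c}=(\varepsilon_d\otimes Fc)F_2(Ud,c)\colon F(Ud\otimes c)\to d\otimes Fc$; the adjunction is left (resp. right) Hopf if $\mathbb H^l$ (resp. $\mathbb H^r$) is invertible. A monoidal category is left closed if each $?\otimes X$ has a right adjoint $[X,?]^l$ with counit $\mathrm{ev}^X_Y\colon[X,Y]^l\otimes X\to Y$, right closed if each $X\otimes ?$ has a right adjoint $[X,?]^r$ with counit $X\otimes[X,Y]^r\to Y$. A strong monoidal functor $U$ (structure $U_2(A,B)\colon UA\otimes UB\to U(A\otimes B)$) is left closed if the canonical morphisms $U[X,Y]^l\to[UX,UY]^l$ corresponding to $U(\mathrm{ev}^X_Y)U_2([X,Y]^l,X)$ are isomorphisms; right closed is defined analogously.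 *)

theory Defs
  imports Main
begin

text \<open>Strict monoidal categories, given by explicit data: a set of objects,
  hom-sets, composition (cmp g f = g after f), identities, tensor on objects
  and on morphisms, and the unit object.\<close>

record ('o, 'm) mcat =
  ob   :: "'o set"
  hom  :: "'o \<Rightarrow> 'o \<Rightarrow> 'm set"
  cmp  :: "'m \<Rightarrow> 'm \<Rightarrow> 'm"
  idt  :: "'o \<Rightarrow> 'm"
  ten  :: "'o \<Rightarrow> 'o \<Rightarrow> 'o"
  tenm :: "'m \<Rightarrow> 'm \<Rightarrow> 'm"
  munit :: "'o"

definition category :: "('o, 'm) mcat \<Rightarrow> bool" where
  "category C \<longleftrightarrow>
     (\<forall>a b. (a \<notin> ob C \<or> b \<notin> ob C) \<longrightarrow> hom C a b = {}) \<and>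
     (\<forall>a\<in>ob C. idt C a \<in> hom C a a) \<and>
     (\<forall>a b c f g. f \<in> hom C a b \<longrightarrow> g \<in> hom C b c \<longrightarrow> cmp C g f \<in> hom C a c) \<and>
     (\<forall>a b f. f \<in> hom C a b \<longrightarrow> cmp C (idt C b) f = f \<and> cmp C f (idt C a) = f) \<and>
     (\<forall>a b c d f g h. f \<in> hom C a b \<longrightarrow> g \<in> hom C b c \<longrightarrow> h \<in> hom C c d \<longrightarrow>
        cmp C h (cmp C g f) = cmp C (cmp C h g) f)"

definition strict_monoidal :: "('o, 'm) mcat \<Rightarrow> bool" where
  "strict_monoidal C \<longleftrightarrow>
     category C \<and> munit C \<in> ob C \<and>
     (\<forall>a\<in>ob C. \<forall>b\<in>ob C. ten C a b \<in> ob C) \<and>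
     (\<forall>a b c d f g. f \<in> hom C a b \<longrightarrow> g \<in> hom C c d \<longrightarrow>
        tenm C f g \<in> hom C (ten C a c) (ten C b d)) \<and>
     (\<forall>a\<in>ob C. \<forall>b\<in>ob C. tenm C (idt C a) (idt C b) = idt C (ten C a b)) \<and>
     (\<forall>a b c a' b' c' f g f' g'. f \<in> hom C a b \<longrightarrow> g \<in> hom C b c \<longrightarrow>
        f' \<in> hom C a' b' \<longrightarrow> g' \<in> hom C b' c' \<longrightarrow>
        tenm C (cmp C g f) (cmp C g' f') = cmp C (tenm C g g') (tenm C f f')) \<and>
     (\<forall>a\<in>ob C. \<forall>b\<in>ob C. \<forall>c\<in>ob C. ten C (ten C a b) c = ten C a (ten C b c)) \<and>
     (\<forall>a\<in>ob C. ten C (munit C) a = a \<and> ten C a (munit C) = a) \<and>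
     (\<forall>a b c d e k f g h. f \<in> hom C a b \<longrightarrow> g \<in> hom C c d \<longrightarrow> h \<in> hom C e k \<longrightarrow>
        tenm C (tenm C f g) h = tenm C f (tenm C g h)) \<and>
     (\<forall>a b f. f \<in> hom C a b \<longrightarrow>
        tenm C (idt C (munit C)) f = f \<and> tenm C f (idt C (munit C)) = f)"

definition "functor" ::
  "('a, 'b) mcat \<Rightarrow> ('c, 'd) mcat \<Rightarrow> ('a \<Rightarrow> 'c) \<Rightarrow> ('b \<Rightarrow> 'd) \<Rightarrow> bool" where
  "functor C D Fo Fm \<longleftrightarrow>
     (\<forall>a\<in>ob C. Fo a \<in> ob D) \<and>
     (\<forall>a b f. f \<in> hom C a b \<longrightarrow> Fm f \<in> hom D (Fo a) (Fo b)) \<and>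
     (\<forall>a\<in>ob C. Fm (idt C a) = idt D (Fo a)) \<and>
     (\<forall>a b c f g. f \<in> hom C a b \<longrightarrow> g \<in> hom C b c \<longrightarrow>
        Fm (cmp C g f) = cmp D (Fm g) (Fm f))"

definition nat_trans ::
  "('a, 'b) mcat \<Rightarrow> ('c, 'd) mcat \<Rightarrow> ('a \<Rightarrow> 'c) \<Rightarrow> ('b \<Rightarrow> 'd) \<Rightarrow>
   ('a \<Rightarrow> 'c) \<Rightarrow> ('b \<Rightarrow> 'd) \<Rightarrow> ('a \<Rightarrow> 'd) \<Rightarrow> bool" where
  "nat_trans C D Go Gm Ho Hm \<theta> \<longleftrightarrow>
     (\<forall>a\<in>ob C. \<theta> a \<in> hom D (Go a) (Ho a)) \<and>
     (\<forall>a b f. f \<in> hom C a b \<longrightarrow> cmp D (\<theta> b) (Gm f) = cmp D (Hm f) (\<theta> a))"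

definition comonoidal_functor ::
  "('a, 'b) mcat \<Rightarrow> ('c, 'd) mcat \<Rightarrow> ('a \<Rightarrow> 'c) \<Rightarrow> ('b \<Rightarrow> 'd) \<Rightarrow>
   ('a \<Rightarrow> 'a \<Rightarrow> 'd) \<Rightarrow> 'd \<Rightarrow> bool" where
  "comonoidal_functor C D Fo Fm F2 F0 \<longleftrightarrow>
     functor C D Fo Fm \<and>
     (\<forall>x\<in>ob C. \<forall>y\<in>ob C. F2 x y \<in> hom D (Fo (ten C x y)) (ten D (Fo x) (Fo y))) \<and>
     F0 \<in> hom D (Fo (munit C)) (munit D) \<and>
     (\<forall>x x' y y' f g. f \<in> hom C x x' \<longrightarrow> g \<in> hom C y y' \<longrightarrow>
        cmp D (F2 x' y') (Fm (tenm C f g)) = cmp D (tenm D (Fm f) (Fm g)) (F2 x y)) \<and>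
     (\<forall>x\<in>ob C. \<forall>y\<in>ob C. \<forall>z\<in>ob C.
        cmp D (tenm D (F2 x y) (idt D (Fo z))) (F2 (ten C x y) z) =
        cmp D (tenm D (idt D (Fo x)) (F2 y z)) (F2 x (ten C y z))) \<and>
     (\<forall>x\<in>ob C.
        cmp D (tenm D F0 (idt D (Fo x))) (F2 (munit C) x) = idt D (Fo x) \<and>
        cmp D (tenm D (idt D (Fo x)) F0) (F2 x (munit C)) = idt D (Fo x))"

definition comonoidal_nat_trans ::
  "('a, 'b) mcat \<Rightarrow> ('c, 'd) mcat \<Rightarrow>
   ('a \<Rightarrow> 'c) \<Rightarrow> ('b \<Rightarrow> 'd) \<Rightarrow> ('a \<Rightarrow> 'a \<Rightarrow> 'd) \<Rightarrow> 'd \<Rightarrow>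
   ('a \<Rightarrow> 'c) \<Rightarrow> ('b \<Rightarrow> 'd) \<Rightarrow> ('a \<Rightarrow> 'a \<Rightarrow> 'd) \<Rightarrow> 'd \<Rightarrow>
   ('a \<Rightarrow> 'd) \<Rightarrow> bool" where
  "comonoidal_nat_trans C D Go Gm G2 G0 Ho Hm H2 H0 \<theta> \<longleftrightarrow>
     nat_trans C D Go Gm Ho Hm \<theta> \<and>
     (\<forall>x\<in>ob C. \<forall>y\<in>ob C.
        cmp D (H2 x y) (\<theta> (ten C x y)) = cmp D (tenm D (\<theta> x) (\<theta> y)) (G2 x y)) \<and>
     cmp D H0 (\<theta> (munit C)) = G0"

text \<open>Comonoidal adjunction (F,U) with unit \<eta> : Id \<Rightarrow> UF and counit \<epsilon> : FU \<Rightarrow> Id;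
  the identity functors carry the identity comonoidal structure and composites
  the composite comonoidal structure.\<close>

definition comonoidal_adjunction ::
  "('a, 'b) mcat \<Rightarrow> ('c, 'd) mcat \<Rightarrow>
   ('a \<Rightarrow> 'c) \<Rightarrow> ('b \<Rightarrow> 'd) \<Rightarrow> ('a \<Rightarrow> 'a \<Rightarrow> 'd) \<Rightarrow> 'd \<Rightarrow>
   ('c \<Rightarrow> 'a) \<Rightarrow> ('d \<Rightarrow> 'b) \<Rightarrow> ('c \<Rightarrow> 'c \<Rightarrow> 'b) \<Rightarrow> 'b \<Rightarrow>
   ('a \<Rightarrow> 'b) \<Rightarrow> ('c \<Rightarrow> 'd) \<Rightarrow> bool" where
  "comonoidal_adjunction C D Fo Fm F2 F0 Uo Um U2 U0 \<eta> \<epsilon> \<longleftrightarrow>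
     strict_monoidal C \<and> strict_monoidal D \<and>
     comonoidal_functor C D Fo Fm F2 F0 \<and>
     comonoidal_functor D C Uo Um U2 U0 \<and>
     comonoidal_nat_trans C C
       (\<lambda>x. x) (\<lambda>f. f) (\<lambda>x y. idt C (ten C x y)) (idt C (munit C))
       (\<lambda>x. Uo (Fo x)) (\<lambda>f. Um (Fm f))
       (\<lambda>x y. cmp C (U2 (Fo x) (Fo y)) (Um (F2 x y))) (cmp C U0 (Um F0)) \<eta> \<and>
     comonoidal_nat_trans D D
       (\<lambda>x. Fo (Uo x)) (\<lambda>f. Fm (Um f))
       (\<lambda>x y. cmp D (F2 (Uo x) (Uo y)) (Fm (U2 x y))) (cmp D F0 (Fm U0))
       (\<lambda>x. x) (\<lambda>f. f) (\<lambda>x y. idt D (ten D x y)) (idt D (munit D)) \<epsilon> \<and>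
     (\<forall>c\<in>ob C. cmp D (\<epsilon> (Fo c)) (Fm (\<eta> c)) = idt D (Fo c)) \<and>
     (\<forall>d\<in>ob D. cmp C (Um (\<epsilon> d)) (\<eta> (Uo d)) = idt C (Uo d))"

definition iso_in :: "('o, 'm) mcat \<Rightarrow> 'o \<Rightarrow> 'o \<Rightarrow> 'm \<Rightarrow> bool" where
  "iso_in C a b f \<longleftrightarrow> f \<in> hom C a b \<and>
     (\<exists>g\<in>hom C b a. cmp C g f = idt C a \<and> cmp C f g = idt C b)"

definition inverse_arr :: "('o, 'm) mcat \<Rightarrow> 'o \<Rightarrow> 'o \<Rightarrow> 'm \<Rightarrow> 'm" where
  "inverse_arr C a b f =
     (THE g. g \<in> hom C b a \<and> cmp C g f = idt C a \<and> cmp C f g = idt C b)"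

definition left_hopf ::
  "('a, 'b) mcat \<Rightarrow> ('c, 'd) mcat \<Rightarrow>
   ('a \<Rightarrow> 'c) \<Rightarrow> ('a \<Rightarrow> 'a \<Rightarrow> 'd) \<Rightarrow> ('c \<Rightarrow> 'a) \<Rightarrow> ('c \<Rightarrow> 'd) \<Rightarrow> bool" where
  "left_hopf C D Fo F2 Uo \<epsilon> \<longleftrightarrow>
     (\<forall>c\<in>ob C. \<forall>d\<in>ob D.
        iso_in D (Fo (ten C c (Uo d))) (ten D (Fo c) d)
          (cmp D (tenm D (idt D (Fo c)) (\<epsilon> d)) (F2 c (Uo d))))"

definition right_hopf ::
  "('a, 'b) mcat \<Rightarrow> ('c, 'd) mcat \<Rightarrow>
   ('a \<Rightarrow> 'c) \<Rightarrow> ('a \<Rightarrow> 'a \<Rightarrow> 'd) \<Rightarrow> ('c \<Rightarrow> 'a) \<Rightarrow> ('c \<Rightarrow> 'd) \<Rightarrow> bool" where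
  "right_hopf C D Fo F2 Uo \<epsilon> \<longleftrightarrow>
     (\<forall>c\<in>ob C. \<forall>d\<in>ob D.
        iso_in D (Fo (ten C (Uo d) c)) (ten D d (Fo c))
          (cmp D (tenm D (\<epsilon> d) (idt D (Fo c))) (F2 (Uo d) c)))"

text \<open>Closed structures: ih X Y is the internal hom, ev X Y the counit of the
  adjunction, expressed via its universal property.\<close>

definition left_closed :: "('o, 'm) mcat \<Rightarrow> ('o \<Rightarrow> 'o \<Rightarrow> 'o) \<Rightarrow> ('o \<Rightarrow> 'o \<Rightarrow> 'm) \<Rightarrow> bool" where
  "left_closed C ih ev \<longleftrightarrow>
     (\<forall>X\<in>ob C. \<forall>Y\<in>ob C. ih X Y \<in> ob C \<and>
        ev X Y \<in> hom C (ten C (ih X Y) X) Y \<and>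
        (\<forall>A\<in>ob C. \<forall>f\<in>hom C (ten C A X) Y.
           \<exists>!g. g \<in> hom C A (ih X Y) \<and> cmp C (ev X Y) (tenm C g (idt C X)) = f))"

definition right_closed :: "('o, 'm) mcat \<Rightarrow> ('o \<Rightarrow> 'o \<Rightarrow> 'o) \<Rightarrow> ('o \<Rightarrow> 'o \<Rightarrow> 'm) \<Rightarrow> bool" where
  "right_closed C ih ev \<longleftrightarrow>
     (\<forall>X\<in>ob C. \<forall>Y\<in>ob C. ih X Y \<in> ob C \<and>
        ev X Y \<in> hom C (ten C X (ih X Y)) Y \<and>
        (\<forall>A\<in>ob C. \<forall>f\<in>hom C (ten C X A) Y.
           \<exists>!g. g \<in> hom C A (ih X Y) \<and> cmp C (ev X Y) (tenm C (idt C X) g) = f))"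

text \<open>Monoidal structure of U: the inverse of the comonoidal structure U2 A B.\<close>

definition mon_str :: "('a, 'b) mcat \<Rightarrow> ('c, 'd) mcat \<Rightarrow> ('c \<Rightarrow> 'a) \<Rightarrow>
   ('c \<Rightarrow> 'c \<Rightarrow> 'b) \<Rightarrow> 'c \<Rightarrow> 'c \<Rightarrow> 'b" where
  "mon_str C D Uo U2 A B =
     inverse_arr C (Uo (ten D A B)) (ten C (Uo A) (Uo B)) (U2 A B)"

definition left_closed_functor ::
  "('a, 'b) mcat \<Rightarrow> ('c, 'd) mcat \<Rightarrow> ('c \<Rightarrow> 'a) \<Rightarrow> ('d \<Rightarrow> 'b) \<Rightarrow> ('c \<Rightarrow> 'c \<Rightarrow> 'b) \<Rightarrow>
   ('a \<Rightarrow> 'a \<Rightarrow> 'a) \<Rightarrow> ('a \<Rightarrow> 'a \<Rightarrow> 'b) \<Rightarrow> ('c \<Rightarrow> 'c \<Rightarrow> 'c) \<Rightarrow> ('c \<Rightarrow> 'c \<Rightarrow> 'd) \<Rightarrow> bool" where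
  "left_closed_functor C D Uo Um U2 ihC evC ihD evD \<longleftrightarrow>
     (\<forall>X\<in>ob D. \<forall>Y\<in>ob D.
        iso_in C (Uo (ihD X Y)) (ihC (Uo X) (Uo Y))
          (THE g. g \<in> hom C (Uo (ihD X Y)) (ihC (Uo X) (Uo Y)) \<and>
             cmp C (evC (Uo X) (Uo Y)) (tenm C g (idt C (Uo X))) =
             cmp C (Um (evD X Y)) (mon_str C D Uo U2 (ihD X Y) X)))"

definition right_closed_functor ::
  "('a, 'b) mcat \<Rightarrow> ('c, 'd) mcat \<Rightarrow> ('c \<Rightarrow> 'a) \<Rightarrow> ('d \<Rightarrow> 'b) \<Rightarrow> ('c \<Rightarrow> 'c \<Rightarrow> 'b) \<Rightarrow>
   ('a \<Rightarrow> 'a \<Rightarrow> 'a) \<Rightarrow> ('a \<Rightarrow> 'a \<Rightarrow> 'b) \<Rightarrow> ('c \<Rightarrow> 'c \<Rightarrow> 'c) \<Rightarrow> ('c \<Rightarrow> 'c \<Rightarrow> 'd) \<Rightarrow> bool" where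
  "right_closed_functor C D Uo Um U2 ihC evC ihD evD \<longleftrightarrow>
     (\<forall>X\<in>ob D. \<forall>Y\<in>ob D.
        iso_in C (Uo (ihD X Y)) (ihC (Uo X) (Uo Y))
          (THE g. g \<in> hom C (Uo (ihD X Y)) (ihC (Uo X) (Uo Y)) \<and>
             cmp C (evC (Uo X) (Uo Y)) (tenm C (idt C (Uo X)) g) =
             cmp C (Um (evD X Y)) (mon_str C D Uo U2 X (ihD X Y))))"

end

theory Submission imports Defs begin

lemma cat_hom_ob: "category X \<Longrightarrow> f \<in> hom X a b \<Longrightarrow> a \<in> ob X \<and> b \<in> ob X"
  unfolding category_def by (elim conjE) blast
lemma cat_id: "category X \<Longrightarrow> a \<in> ob X \<Longrightarrow> idt X a \<in> hom X a a"
  unfolding category_def by (elim conjE) blast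
lemma cat_comp: "category X \<Longrightarrow> f \<in> hom X a b \<Longrightarrow> g \<in> hom X b c \<Longrightarrow> cmp X g f \<in> hom X a c"
  unfolding category_def by (elim conjE) blast
lemma cat_idl: "category X \<Longrightarrow> f \<in> hom X a b \<Longrightarrow> cmp X (idt X b) f = f"
  unfolding category_def by (elim conjE) blast
lemma cat_idr: "category X \<Longrightarrow> f \<in> hom X a b \<Longrightarrow> cmp X f (idt X a) = f"
  unfolding category_def by (elim conjE) blast
lemma cat_assoc: "category X \<Longrightarrow> f \<in> hom X a b \<Longrightarrow> g \<in> hom X b c \<Longrightarrow> h \<in> hom X c d \<Longrightarrow>
   cmp X h (cmp X g f) = cmp X (cmp X h g) f"
  unfolding category_def by (elim conjE) blast

lemma sm_cat: "strict_monoidal X \<Longrightarrow> category X"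
  unfolding strict_monoidal_def by (elim conjE) blast
lemma sm_ten_ob: "strict_monoidal X \<Longrightarrow> a \<in> ob X \<Longrightarrow> b \<in> ob X \<Longrightarrow> ten X a b \<in> ob X"
  unfolding strict_monoidal_def by (elim conjE) blast
lemma sm_tenm: "strict_monoidal X \<Longrightarrow> f \<in> hom X a b \<Longrightarrow> g \<in> hom X c d \<Longrightarrow>
   tenm X f g \<in> hom X (ten X a c) (ten X b d)"
  unfolding strict_monoidal_def by (elim conjE) blast
lemma sm_ten_id: "strict_monoidal X \<Longrightarrow> a \<in> ob X \<Longrightarrow> b \<in> ob X \<Longrightarrow>
   tenm X (idt X a) (idt X b) = idt X (ten X a b)"
  unfolding strict_monoidal_def by (elim conjE) blast
lemma sm_inter: "strict_monoidal X \<Longrightarrow> f \<in> hom X a b \<Longrightarrow> g \<in> hom X b c \<Longrightarrow>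
        f' \<in> hom X a' b' \<Longrightarrow> g' \<in> hom X b' c' \<Longrightarrow>
        tenm X (cmp X g f) (cmp X g' f') = cmp X (tenm X g g') (tenm X f f')"
  unfolding strict_monoidal_def by (elim conjE) blast

lemma fun_ob: "functor X Y Fo Fm \<Longrightarrow> a \<in> ob X \<Longrightarrow> Fo a \<in> ob Y"
  unfolding functor_def by (elim conjE) blast
lemma fun_hom: "functor X Y Fo Fm \<Longrightarrow> f \<in> hom X a b \<Longrightarrow> Fm f \<in> hom Y (Fo a) (Fo b)"
  unfolding functor_def by (elim conjE) blast
lemma fun_id: "functor X Y Fo Fm \<Longrightarrow> a \<in> ob X \<Longrightarrow> Fm (idt X a) = idt Y (Fo a)"
  unfolding functor_def by (elim conjE) blast
lemma fun_comp: "functor X Y Fo Fm \<Longrightarrow> f \<in> hom X a b \<Longrightarrow> g \<in> hom X b c \<Longrightarrow>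
   Fm (cmp X g f) = cmp Y (Fm g) (Fm f)"
  unfolding functor_def by (elim conjE) blast

lemma iso_pre:
  assumes X: "category X" and h: "h \<in> hom X a b"
  shows "iso_in X a b h \<longleftrightarrow> (\<forall>z\<in>ob X. bij_betw (\<lambda>k. cmp X k h) (hom X b z) (hom X a z))"
proof
  assume "iso_in X a b h"
  then obtain g where g: "g \<in> hom X b a" "cmp X g h = idt X a" "cmp X h g = idt X b"
    unfolding iso_in_def by blast
  show "\<forall>z\<in>ob X. bij_betw (\<lambda>k. cmp X k h) (hom X b z) (hom X a z)"
  proof
    fix z assume z: "z \<in> ob X"
    show "bij_betw (\<lambda>k. cmp X k h) (hom X b z) (hom X a z)"
    proof (rule bij_betw_byWitness[where f'="\<lambda>k. cmp X k g"])
      show "\<forall>k\<in>hom X b z. cmp X (cmp X k h) g = k"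
        using g h X by (metis cat_assoc cat_idr)
      show "\<forall>k\<in>hom X a z. cmp X (cmp X k g) h = k"
        using g h X by (metis cat_assoc cat_idr)
      show "(\<lambda>k. cmp X k h) ` hom X b z \<subseteq> hom X a z" using h X by (blast intro: cat_comp)
      show "(\<lambda>k. cmp X k g) ` hom X a z \<subseteq> hom X b z" using g X by (blast intro: cat_comp)
    qed
  qed
next
  assume A: "\<forall>z\<in>ob X. bij_betw (\<lambda>k. cmp X k h) (hom X b z) (hom X a z)"
  have ab: "a \<in> ob X" "b \<in> ob X" using cat_hom_ob[OF X h] by auto
  have "idt X a \<in> (\<lambda>k. cmp X k h) ` hom X b a"
    using A ab cat_id[OF X] unfolding bij_betw_def by blast
  then obtain g where g: "g \<in> hom X b a" "cmp X g h = idt X a" by auto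
  have inj: "inj_on (\<lambda>k. cmp X k h) (hom X b b)" using A ab unfolding bij_betw_def by blast
  have hg: "cmp X h g \<in> hom X b b" by (rule cat_comp[OF X g(1) h])
  have "cmp X (cmp X h g) h = cmp X (idt X b) h"
    using g h X by (metis cat_assoc cat_idl cat_idr)
  then have "cmp X h g = idt X b" using inj hg cat_id[OF X ab(2)] unfolding inj_on_def by blast
  then show "iso_in X a b h" unfolding iso_in_def using g h by blast
qed

lemma iso_post:
  assumes X: "category X" and h: "h \<in> hom X a b"
  shows "iso_in X a b h \<longleftrightarrow> (\<forall>z\<in>ob X. bij_betw (\<lambda>k. cmp X h k) (hom X z a) (hom X z b))"
proof
  assume "iso_in X a b h"
  then obtain g where g: "g \<in> hom X b a" "cmp X g h = idt X a" "cmp X h g = idt X b"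
    unfolding iso_in_def by blast
  show "\<forall>z\<in>ob X. bij_betw (\<lambda>k. cmp X h k) (hom X z a) (hom X z b)"
  proof
    fix z assume z: "z \<in> ob X"
    show "bij_betw (\<lambda>k. cmp X h k) (hom X z a) (hom X z b)"
    proof (rule bij_betw_byWitness[where f'="\<lambda>k. cmp X g k"])
      show "\<forall>k\<in>hom X z a. cmp X g (cmp X h k) = k"
        using g h X by (metis cat_assoc cat_idl)
      show "\<forall>k\<in>hom X z b. cmp X h (cmp X g k) = k"
        using g h X by (metis cat_assoc cat_idl)
      show "(\<lambda>k. cmp X h k) ` hom X z a \<subseteq> hom X z b" using h X by (blast intro: cat_comp)
      show "(\<lambda>k. cmp X g k) ` hom X z b \<subseteq> hom X z a" using g X by (blast intro: cat_comp)
    qed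
  qed
next
  assume A: "\<forall>z\<in>ob X. bij_betw (\<lambda>k. cmp X h k) (hom X z a) (hom X z b)"
  have ab: "a \<in> ob X" "b \<in> ob X" using cat_hom_ob[OF X h] by auto
  have "idt X b \<in> (\<lambda>k. cmp X h k) ` hom X b a"
    using A ab cat_id[OF X] unfolding bij_betw_def by blast
  then obtain g where g: "g \<in> hom X b a" "cmp X h g = idt X b" by auto
  have inj: "inj_on (\<lambda>k. cmp X h k) (hom X a a)" using A ab unfolding bij_betw_def by blast
  have hg: "cmp X g h \<in> hom X a a" by (rule cat_comp[OF X h g(1)])
  have "cmp X h (cmp X g h) = cmp X h (idt X a)"
    using g h X by (metis cat_assoc cat_idl cat_idr)
  then have "cmp X g h = idt X a" using inj hg cat_id[OF X ab(1)] unfolding inj_on_def by blast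
  then show "iso_in X a b h" unfolding iso_in_def using g h by blast
qed

lemma lc_bij:
  assumes X: "strict_monoidal X" and lc: "left_closed X ih ev"
    and o: "A \<in> ob X" "P \<in> ob X" "Q \<in> ob X"
  shows "bij_betw (\<lambda>g. cmp X (ev P Q) (tenm X g (idt X P))) (hom X A (ih P Q)) (hom X (ten X A P) Q)"
proof -
  have c: "category X" using sm_cat[OF X] .
  have e: "ev P Q \<in> hom X (ten X (ih P Q) P) Q" "ih P Q \<in> ob X"
    and u: "\<forall>f\<in>hom X (ten X A P) Q. \<exists>!g. g \<in> hom X A (ih P Q) \<and> cmp X (ev P Q) (tenm X g (idt X P)) = f"
    using lc o unfolding left_closed_def by blast+
  have into: "\<And>g. g \<in> hom X A (ih P Q) \<Longrightarrow> cmp X (ev P Q) (tenm X g (idt X P)) \<in> hom X (ten X A P) Q"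
    using e c X o by (meson cat_comp cat_id sm_tenm)
  show ?thesis unfolding bij_betw_def inj_on_def
  proof (intro conjI ballI impI equalityI subsetI)
    fix g g' assume "g \<in> hom X A (ih P Q)" "g' \<in> hom X A (ih P Q)"
      "cmp X (ev P Q) (tenm X g (idt X P)) = cmp X (ev P Q) (tenm X g' (idt X P))"
    then show "g = g'" using u into by metis
  next
    fix f assume "f \<in> (\<lambda>g. cmp X (ev P Q) (tenm X g (idt X P))) ` hom X A (ih P Q)"
    then show "f \<in> hom X (ten X A P) Q" using into by blast
  next
    fix f assume "f \<in> hom X (ten X A P) Q"
    then show "f \<in> (\<lambda>g. cmp X (ev P Q) (tenm X g (idt X P))) ` hom X A (ih P Q)"
      using u by blast
  qed
qed


locale cadj =
  fixes C :: "('a, 'b) mcat" and D :: "('c, 'd) mcat"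
    and Fo Fm F2 F0 Uo Um U2 U0 \<eta> \<epsilon>
  assumes adj: "comonoidal_adjunction C D Fo Fm F2 F0 Uo Um U2 U0 \<eta> \<epsilon>"
begin

lemma C: "strict_monoidal C" and D: "strict_monoidal D"
  and F: "comonoidal_functor C D Fo Fm F2 F0" and U: "comonoidal_functor D C Uo Um U2 U0"
  and etaT: "comonoidal_nat_trans C C
       (\<lambda>x. x) (\<lambda>f. f) (\<lambda>x y. idt C (ten C x y)) (idt C (munit C))
       (\<lambda>x. Uo (Fo x)) (\<lambda>f. Um (Fm f))
       (\<lambda>x y. cmp C (U2 (Fo x) (Fo y)) (Um (F2 x y))) (cmp C U0 (Um F0)) \<eta>"
  and epsT: "comonoidal_nat_trans D D
       (\<lambda>x. Fo (Uo x)) (\<lambda>f. Fm (Um f))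
       (\<lambda>x y. cmp D (F2 (Uo x) (Uo y)) (Fm (U2 x y))) (cmp D F0 (Fm U0))
       (\<lambda>x. x) (\<lambda>f. f) (\<lambda>x y. idt D (ten D x y)) (idt D (munit D)) \<epsilon>"
  and tri1: "\<And>c. c\<in>ob C \<Longrightarrow> cmp D (\<epsilon> (Fo c)) (Fm (\<eta> c)) = idt D (Fo c)"
  and tri2: "\<And>d. d\<in>ob D \<Longrightarrow> cmp C (Um (\<epsilon> d)) (\<eta> (Uo d)) = idt C (Uo d)"
  using adj unfolding comonoidal_adjunction_def by auto

lemma cC: "category C" using sm_cat[OF C] .
lemma cD: "category D" using sm_cat[OF D] .
lemma Ff: "functor C D Fo Fm" using F unfolding comonoidal_functor_def by blast
lemma Uf: "functor D C Uo Um" using U unfolding comonoidal_functor_def by blast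

lemma F2_hom: "x\<in>ob C \<Longrightarrow> y\<in>ob C \<Longrightarrow> F2 x y \<in> hom D (Fo (ten C x y)) (ten D (Fo x) (Fo y))"
  using F unfolding comonoidal_functor_def by blast
lemma F2_nat: "f \<in> hom C x x' \<Longrightarrow> g \<in> hom C y y' \<Longrightarrow>
        cmp D (F2 x' y') (Fm (tenm C f g)) = cmp D (tenm D (Fm f) (Fm g)) (F2 x y)"
  using F unfolding comonoidal_functor_def by blast
lemma U2_hom: "x\<in>ob D \<Longrightarrow> y\<in>ob D \<Longrightarrow> U2 x y \<in> hom C (Uo (ten D x y)) (ten C (Uo x) (Uo y))"
  using U unfolding comonoidal_functor_def by blast
lemma U2_nat: "f \<in> hom D x x' \<Longrightarrow> g \<in> hom D y y' \<Longrightarrow>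
        cmp C (U2 x' y') (Um (tenm D f g)) = cmp C (tenm C (Um f) (Um g)) (U2 x y)"
  using U unfolding comonoidal_functor_def by blast

lemma eta_hom: "c \<in> ob C \<Longrightarrow> \<eta> c \<in> hom C c (Uo (Fo c))"
  using etaT unfolding comonoidal_nat_trans_def nat_trans_def by blast
lemma eta_nat: "f \<in> hom C a b \<Longrightarrow> cmp C (\<eta> b) f = cmp C (Um (Fm f)) (\<eta> a)"
  using etaT unfolding comonoidal_nat_trans_def nat_trans_def by blast
lemma eps_hom: "d \<in> ob D \<Longrightarrow> \<epsilon> d \<in> hom D (Fo (Uo d)) d"
  using epsT unfolding comonoidal_nat_trans_def nat_trans_def by blast
lemma eps_nat: "f \<in> hom D a b \<Longrightarrow> cmp D (\<epsilon> b) (Fm (Um f)) = cmp D f (\<epsilon> a)"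
  using epsT unfolding comonoidal_nat_trans_def nat_trans_def by blast

lemma eta_mon: assumes "x\<in>ob C" "y\<in>ob C"
  shows "cmp C (cmp C (U2 (Fo x) (Fo y)) (Um (F2 x y))) (\<eta> (ten C x y)) = tenm C (\<eta> x) (\<eta> y)"
proof -
  have "cmp C (cmp C (U2 (Fo x) (Fo y)) (Um (F2 x y))) (\<eta> (ten C x y))
      = cmp C (tenm C (\<eta> x) (\<eta> y)) (idt C (ten C x y))"
    using etaT assms unfolding comonoidal_nat_trans_def by blast
  also have "\<dots> = tenm C (\<eta> x) (\<eta> y)"
    using cat_idr[OF cC sm_tenm[OF C eta_hom[OF assms(1)] eta_hom[OF assms(2)]]] .
  finally show ?thesis .
qed

lemma eps_mon: assumes "x\<in>ob D" "y\<in>ob D"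
  shows "\<epsilon> (ten D x y) = cmp D (tenm D (\<epsilon> x) (\<epsilon> y)) (cmp D (F2 (Uo x) (Uo y)) (Fm (U2 x y)))"
proof -
  have "cmp D (idt D (ten D x y)) (\<epsilon> (ten D x y))
      = cmp D (tenm D (\<epsilon> x) (\<epsilon> y)) (cmp D (F2 (Uo x) (Uo y)) (Fm (U2 x y)))"
    using epsT assms unfolding comonoidal_nat_trans_def by blast
  moreover have "cmp D (idt D (ten D x y)) (\<epsilon> (ten D x y)) = \<epsilon> (ten D x y)"
    using cat_idl[OF cD eps_hom[OF sm_ten_ob[OF D assms]]] .
  ultimately show ?thesis by simp
qed

lemma Fob: "c \<in> ob C \<Longrightarrow> Fo c \<in> ob D" using fun_ob[OF Ff] .
lemma Uob: "d \<in> ob D \<Longrightarrow> Uo d \<in> ob C" using fun_ob[OF Uf] .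
lemma Fh: "f \<in> hom C a b \<Longrightarrow> Fm f \<in> hom D (Fo a) (Fo b)" using fun_hom[OF Ff] .
lemma Uh: "f \<in> hom D a b \<Longrightarrow> Um f \<in> hom C (Uo a) (Uo b)" using fun_hom[OF Uf] .
lemma Cten: "a \<in> ob C \<Longrightarrow> b \<in> ob C \<Longrightarrow> ten C a b \<in> ob C" using sm_ten_ob[OF C] .
lemma Dten: "a \<in> ob D \<Longrightarrow> b \<in> ob D \<Longrightarrow> ten D a b \<in> ob D" using sm_ten_ob[OF D] .

definition m where
  "m A B = cmp C (Um (tenm D (\<epsilon> A) (\<epsilon> B)))
             (cmp C (Um (F2 (Uo A) (Uo B))) (\<eta> (ten C (Uo A) (Uo B))))"

lemma m_hom: assumes A: "A \<in> ob D" and B: "B \<in> ob D"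
  shows "m A B \<in> hom C (ten C (Uo A) (Uo B)) (Uo (ten D A B))"
proof -
  have x: "Uo A \<in> ob C" "Uo B \<in> ob C" using Uob A B by auto
  have h1: "\<eta> (ten C (Uo A) (Uo B)) \<in> hom C (ten C (Uo A) (Uo B)) (Uo (Fo (ten C (Uo A) (Uo B))))"
    using eta_hom Cten x by blast
  have h2: "Um (F2 (Uo A) (Uo B)) \<in> hom C (Uo (Fo (ten C (Uo A) (Uo B)))) (Uo (ten D (Fo (Uo A)) (Fo (Uo B))))"
    using Uh F2_hom x by blast
  have h3: "Um (tenm D (\<epsilon> A) (\<epsilon> B)) \<in> hom C (Uo (ten D (Fo (Uo A)) (Fo (Uo B)))) (Uo (ten D A B))"
    using Uh sm_tenm[OF D eps_hom[OF A] eps_hom[OF B]] by blast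
  show ?thesis unfolding m_def using cat_comp[OF cC cat_comp[OF cC h1 h2] h3]
    cat_assoc[OF cC h1 h2 h3] by simp
qed

lemma m_inv:
  assumes A: "A \<in> ob D" and B: "B \<in> ob D"
  shows "cmp C (U2 A B) (m A B) = idt C (ten C (Uo A) (Uo B))"
    and "cmp C (m A B) (U2 A B) = idt C (Uo (ten D A B))"
proof -
  have x: "Uo A \<in> ob C" "Uo B \<in> ob C" using Uob A B by auto
  have fx: "Fo (Uo A) \<in> ob D" "Fo (Uo B) \<in> ob D" using Fob x by auto
  have eA: "\<epsilon> A \<in> hom D (Fo (Uo A)) A" and eB: "\<epsilon> B \<in> hom D (Fo (Uo B)) B"
    using eps_hom A B by auto
  have h1: "\<eta> (ten C (Uo A) (Uo B)) \<in> hom C (ten C (Uo A) (Uo B)) (Uo (Fo (ten C (Uo A) (Uo B))))"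
    using eta_hom Cten x by blast
  have F2h: "F2 (Uo A) (Uo B) \<in> hom D (Fo (ten C (Uo A) (Uo B))) (ten D (Fo (Uo A)) (Fo (Uo B)))"
    using F2_hom x by blast
  have h2: "Um (F2 (Uo A) (Uo B)) \<in> hom C (Uo (Fo (ten C (Uo A) (Uo B)))) (Uo (ten D (Fo (Uo A)) (Fo (Uo B))))"
    using Uh F2h by blast
  have tee: "tenm D (\<epsilon> A) (\<epsilon> B) \<in> hom D (ten D (Fo (Uo A)) (Fo (Uo B))) (ten D A B)"
    using sm_tenm[OF D eA eB] .
  have h3: "Um (tenm D (\<epsilon> A) (\<epsilon> B)) \<in> hom C (Uo (ten D (Fo (Uo A)) (Fo (Uo B)))) (Uo (ten D A B))"
    using Uh tee by blast
  have u: "U2 A B \<in> hom C (Uo (ten D A B)) (ten C (Uo A) (Uo B))" using U2_hom A B .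
  have u': "U2 (Fo (Uo A)) (Fo (Uo B)) \<in> hom C (Uo (ten D (Fo (Uo A)) (Fo (Uo B)))) (ten C (Uo (Fo (Uo A))) (Uo (Fo (Uo B))))"
    using U2_hom fx by blast
  have UeA: "Um (\<epsilon> A) \<in> hom C (Uo (Fo (Uo A))) (Uo A)" using Uh eA .
  have UeB: "Um (\<epsilon> B) \<in> hom C (Uo (Fo (Uo B))) (Uo B)" using Uh eB .
  have tUe: "tenm C (Um (\<epsilon> A)) (Um (\<epsilon> B)) \<in> hom C (ten C (Uo (Fo (Uo A))) (Uo (Fo (Uo B)))) (ten C (Uo A) (Uo B))"
    using sm_tenm[OF C UeA UeB] .
  have c12: "cmp C (Um (F2 (Uo A) (Uo B))) (\<eta> (ten C (Uo A) (Uo B))) \<in> hom C (ten C (Uo A) (Uo B)) (Uo (ten D (Fo (Uo A)) (Fo (Uo B))))"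
    using cat_comp[OF cC h1 h2] .
  have "cmp C (U2 A B) (m A B)
      = cmp C (cmp C (U2 A B) (Um (tenm D (\<epsilon> A) (\<epsilon> B))))
              (cmp C (Um (F2 (Uo A) (Uo B))) (\<eta> (ten C (Uo A) (Uo B))))"
    unfolding m_def using cat_assoc[OF cC c12 h3 u] .
  also have "\<dots> = cmp C (cmp C (tenm C (Um (\<epsilon> A)) (Um (\<epsilon> B))) (U2 (Fo (Uo A)) (Fo (Uo B))))
              (cmp C (Um (F2 (Uo A) (Uo B))) (\<eta> (ten C (Uo A) (Uo B))))"
    using U2_nat[OF eA eB] by simp
  also have "\<dots> = cmp C (tenm C (Um (\<epsilon> A)) (Um (\<epsilon> B))) (cmp C (U2 (Fo (Uo A)) (Fo (Uo B)))
              (cmp C (Um (F2 (Uo A) (Uo B))) (\<eta> (ten C (Uo A) (Uo B)))))"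
    using cat_assoc[OF cC c12 u' tUe] by simp
  also have "\<dots> = cmp C (tenm C (Um (\<epsilon> A)) (Um (\<epsilon> B))) (cmp C (cmp C (U2 (Fo (Uo A)) (Fo (Uo B)))
              (Um (F2 (Uo A) (Uo B)))) (\<eta> (ten C (Uo A) (Uo B))))"
    using cat_assoc[OF cC h1 h2 u'] by simp
  also have "\<dots> = cmp C (tenm C (Um (\<epsilon> A)) (Um (\<epsilon> B))) (tenm C (\<eta> (Uo A)) (\<eta> (Uo B)))"
    using eta_mon[OF x] by simp
  also have "\<dots> = tenm C (cmp C (Um (\<epsilon> A)) (\<eta> (Uo A))) (cmp C (Um (\<epsilon> B)) (\<eta> (Uo B)))"
    using sm_inter[OF C eta_hom[OF x(1)] UeA eta_hom[OF x(2)] UeB] by simp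
  also have "\<dots> = idt C (ten C (Uo A) (Uo B))"
    using tri2[OF A] tri2[OF B] sm_ten_id[OF C x] by simp
  finally show "cmp C (U2 A B) (m A B) = idt C (ten C (Uo A) (Uo B))" .
  have AB: "ten D A B \<in> ob D" using Dten A B .
  have eu: "\<eta> (Uo (ten D A B)) \<in> hom C (Uo (ten D A B)) (Uo (Fo (Uo (ten D A B))))"
    using eta_hom Uob AB by blast
  have Fu: "Fm (U2 A B) \<in> hom D (Fo (Uo (ten D A B))) (Fo (ten C (Uo A) (Uo B)))" using Fh u .
  have UFu: "Um (Fm (U2 A B)) \<in> hom C (Uo (Fo (Uo (ten D A B)))) (Uo (Fo (ten C (Uo A) (Uo B))))"
    using Uh Fu .
  have c32: "cmp C (Um (tenm D (\<epsilon> A) (\<epsilon> B))) (Um (F2 (Uo A) (Uo B))) \<in> hom C (Uo (Fo (ten C (Uo A) (Uo B)))) (Uo (ten D A B))"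
    using cat_comp[OF cC h2 h3] .
  have "cmp C (m A B) (U2 A B)
      = cmp C (cmp C (Um (tenm D (\<epsilon> A) (\<epsilon> B))) (Um (F2 (Uo A) (Uo B))))
          (cmp C (\<eta> (ten C (Uo A) (Uo B))) (U2 A B))"
    unfolding m_def using cat_assoc[OF cC h1 h2 h3] cat_assoc[OF cC u h1 c32] by simp
  also have "\<dots> = cmp C (cmp C (Um (tenm D (\<epsilon> A) (\<epsilon> B))) (Um (F2 (Uo A) (Uo B))))
          (cmp C (Um (Fm (U2 A B))) (\<eta> (Uo (ten D A B))))"
    using eta_nat[OF u] by simp
  also have "\<dots> = cmp C (cmp C (cmp C (Um (tenm D (\<epsilon> A) (\<epsilon> B))) (Um (F2 (Uo A) (Uo B)))) (Um (Fm (U2 A B))))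
          (\<eta> (Uo (ten D A B)))"
    using cat_assoc[OF cC eu UFu c32] by simp
  also have "\<dots> = cmp C (Um (cmp D (tenm D (\<epsilon> A) (\<epsilon> B)) (cmp D (F2 (Uo A) (Uo B)) (Fm (U2 A B)))))
          (\<eta> (Uo (ten D A B)))"
    using fun_comp[OF Uf F2h tee] fun_comp[OF Uf Fu cat_comp[OF cD F2h tee]]
      cat_assoc[OF cD Fu F2h tee] by simp
  also have "\<dots> = cmp C (Um (\<epsilon> (ten D A B))) (\<eta> (Uo (ten D A B)))"
    using eps_mon[OF A B] by simp
  also have "\<dots> = idt C (Uo (ten D A B))" using tri2[OF AB] .
  finally show "cmp C (m A B) (U2 A B) = idt C (Uo (ten D A B))" .
qed

lemma mon_str_eq: assumes A: "A \<in> ob D" and B: "B \<in> ob D"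
  shows "mon_str C D Uo U2 A B = m A B"
  unfolding mon_str_def inverse_arr_def
proof (rule the_equality)
  show "m A B \<in> hom C (ten C (Uo A) (Uo B)) (Uo (ten D A B)) \<and>
    cmp C (m A B) (U2 A B) = idt C (Uo (ten D A B)) \<and> cmp C (U2 A B) (m A B) = idt C (ten C (Uo A) (Uo B))"
    using m_hom m_inv A B by blast
  fix g assume g: "g \<in> hom C (ten C (Uo A) (Uo B)) (Uo (ten D A B)) \<and>
    cmp C g (U2 A B) = idt C (Uo (ten D A B)) \<and> cmp C (U2 A B) g = idt C (ten C (Uo A) (Uo B))"
  have u: "U2 A B \<in> hom C (Uo (ten D A B)) (ten C (Uo A) (Uo B))" using U2_hom A B .
  have "g = cmp C g (cmp C (U2 A B) (m A B))" using m_inv(1)[OF A B] cat_idr[OF cC conjunct1[OF g]] by simp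
  also have "\<dots> = cmp C (cmp C g (U2 A B)) (m A B)" using cat_assoc[OF cC m_hom[OF A B] u] g by blast
  also have "\<dots> = m A B" using g cat_idl[OF cC m_hom[OF A B]] by simp
  finally show "g = m A B" .
qed

definition H where "H c d = cmp D (tenm D (idt D (Fo c)) (\<epsilon> d)) (F2 c (Uo d))"

lemma H_hom: "c \<in> ob C \<Longrightarrow> d \<in> ob D \<Longrightarrow> H c d \<in> hom D (Fo (ten C c (Uo d))) (ten D (Fo c) d)"
  unfolding H_def
  by (rule cat_comp[OF cD F2_hom sm_tenm[OF D cat_id[OF cD] eps_hom]]) (auto intro: Fob Uob)

lemma Dpart:
  assumes c: "c \<in> ob C" and d: "d \<in> ob D" and I: "I \<in> ob D"
    and ev: "ev \<in> hom D (ten D I d) e" and g: "g \<in> hom C c (Uo I)"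
  shows "cmp D (cmp D ev (tenm D (cmp D (\<epsilon> I) (Fm g)) (idt D d))) (H c d)
       = cmp D (cmp D (cmp D ev (tenm D (\<epsilon> I) (\<epsilon> d))) (F2 (Uo I) (Uo d)))
           (Fm (tenm C g (idt C (Uo d))))"
proof -
  have x: "Uo d \<in> ob C" "Uo I \<in> ob C" using Uob d I by auto
  have Fc: "Fo c \<in> ob D" using Fob c .
  have eI: "\<epsilon> I \<in> hom D (Fo (Uo I)) I" using eps_hom I .
  have ed: "\<epsilon> d \<in> hom D (Fo (Uo d)) d" using eps_hom d .
  have Fg: "Fm g \<in> hom D (Fo c) (Fo (Uo I))" using Fh g .
  have pg: "cmp D (\<epsilon> I) (Fm g) \<in> hom D (Fo c) I" using cat_comp[OF cD Fg eI] .
  have tee: "tenm D (\<epsilon> I) (\<epsilon> d) \<in> hom D (ten D (Fo (Uo I)) (Fo (Uo d))) (ten D I d)"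
    using sm_tenm[OF D eI ed] .
  have F2': "F2 (Uo I) (Uo d) \<in> hom D (Fo (ten C (Uo I) (Uo d))) (ten D (Fo (Uo I)) (Fo (Uo d)))"
    using F2_hom x by blast
  have F2c: "F2 c (Uo d) \<in> hom D (Fo (ten C c (Uo d))) (ten D (Fo c) (Fo (Uo d)))"
    using F2_hom c x by blast
  have idFc: "idt D (Fo c) \<in> hom D (Fo c) (Fo c)" using cat_id[OF cD Fc] .
  have idd: "idt D d \<in> hom D d d" using cat_id[OF cD d] .
  have idFx: "idt D (Fo (Uo d)) \<in> hom D (Fo (Uo d)) (Fo (Uo d))" using cat_id[OF cD Fob[OF x(1)]] .
  have ie: "tenm D (idt D (Fo c)) (\<epsilon> d) \<in> hom D (ten D (Fo c) (Fo (Uo d))) (ten D (Fo c) d)"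
    using sm_tenm[OF D idFc ed] .
  have Hh: "H c d \<in> hom D (Fo (ten C c (Uo d))) (ten D (Fo c) d)" using H_hom c d .
  have pt: "tenm D (cmp D (\<epsilon> I) (Fm g)) (idt D d) \<in> hom D (ten D (Fo c) d) (ten D I d)"
    using sm_tenm[OF D pg idd] .
  have idx: "idt C (Uo d) \<in> hom C (Uo d) (Uo d)" using cat_id[OF cC x(1)] .
  have t: "tenm C g (idt C (Uo d)) \<in> hom C (ten C c (Uo d)) (ten C (Uo I) (Uo d))"
    using sm_tenm[OF C g idx] .
  have Ft: "Fm (tenm C g (idt C (Uo d))) \<in> hom D (Fo (ten C c (Uo d))) (Fo (ten C (Uo I) (Uo d)))"
    using Fh t .
  have tF: "tenm D (Fm g) (idt D (Fo (Uo d))) \<in> hom D (ten D (Fo c) (Fo (Uo d))) (ten D (Fo (Uo I)) (Fo (Uo d)))"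
    using sm_tenm[OF D Fg idFx] .
  have "cmp D (cmp D ev (tenm D (cmp D (\<epsilon> I) (Fm g)) (idt D d))) (H c d)
      = cmp D ev (cmp D (tenm D (cmp D (\<epsilon> I) (Fm g)) (idt D d)) (H c d))"
    using cat_assoc[OF cD Hh pt ev] by simp
  also have "cmp D (tenm D (cmp D (\<epsilon> I) (Fm g)) (idt D d)) (H c d)
      = cmp D (cmp D (tenm D (cmp D (\<epsilon> I) (Fm g)) (idt D d)) (tenm D (idt D (Fo c)) (\<epsilon> d))) (F2 c (Uo d))"
    unfolding H_def using cat_assoc[OF cD F2c ie pt] .
  also have "cmp D (tenm D (cmp D (\<epsilon> I) (Fm g)) (idt D d)) (tenm D (idt D (Fo c)) (\<epsilon> d))
      = tenm D (cmp D (\<epsilon> I) (Fm g)) (\<epsilon> d)"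
    using sm_inter[OF D idFc pg ed idd] cat_idr[OF cD pg] cat_idl[OF cD ed] by simp
  also have "\<dots> = cmp D (tenm D (\<epsilon> I) (\<epsilon> d)) (tenm D (Fm g) (idt D (Fo (Uo d))))"
    using sm_inter[OF D Fg eI idFx ed] cat_idr[OF cD ed] by simp
  also have "cmp D (cmp D (tenm D (\<epsilon> I) (\<epsilon> d)) (tenm D (Fm g) (idt D (Fo (Uo d))))) (F2 c (Uo d))
      = cmp D (tenm D (\<epsilon> I) (\<epsilon> d)) (cmp D (tenm D (Fm g) (Fm (idt C (Uo d)))) (F2 c (Uo d)))"
    using cat_assoc[OF cD F2c tF tee] fun_id[OF Ff x(1)] by simp
  also have "\<dots> = cmp D (tenm D (\<epsilon> I) (\<epsilon> d)) (cmp D (F2 (Uo I) (Uo d)) (Fm (tenm C g (idt C (Uo d)))))"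
    using F2_nat[OF g idx] by simp
  also have "cmp D ev \<dots> = cmp D (cmp D (cmp D ev (tenm D (\<epsilon> I) (\<epsilon> d))) (F2 (Uo I) (Uo d)))
           (Fm (tenm C g (idt C (Uo d))))"
    using cat_assoc[OF cD Ft F2' tee] cat_assoc[OF cD Ft cat_comp[OF cD F2' tee] ev]
      cat_assoc[OF cD F2' tee ev] by simp
  finally show ?thesis .
qed

lemma Cpart:
  assumes c: "c \<in> ob C" and d: "d \<in> ob D" and I: "I \<in> ob D"
    and ev: "ev \<in> hom D (ten D I d) e" and g: "g \<in> hom C c (Uo I)"
  shows "cmp C (Um (cmp D (cmp D (cmp D ev (tenm D (\<epsilon> I) (\<epsilon> d))) (F2 (Uo I) (Uo d)))
           (Fm (tenm C g (idt C (Uo d)))))) (\<eta> (ten C c (Uo d)))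
       = cmp C (cmp C (Um ev) (m I d)) (tenm C g (idt C (Uo d)))"
proof -
  have x: "Uo d \<in> ob C" "Uo I \<in> ob C" using Uob d I by auto
  have eI: "\<epsilon> I \<in> hom D (Fo (Uo I)) I" using eps_hom I .
  have ed: "\<epsilon> d \<in> hom D (Fo (Uo d)) d" using eps_hom d .
  have tee: "tenm D (\<epsilon> I) (\<epsilon> d) \<in> hom D (ten D (Fo (Uo I)) (Fo (Uo d))) (ten D I d)"
    using sm_tenm[OF D eI ed] .
  have F2': "F2 (Uo I) (Uo d) \<in> hom D (Fo (ten C (Uo I) (Uo d))) (ten D (Fo (Uo I)) (Fo (Uo d)))"
    using F2_hom x by blast
  have idx: "idt C (Uo d) \<in> hom C (Uo d) (Uo d)" using cat_id[OF cC x(1)] .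
  have t: "tenm C g (idt C (Uo d)) \<in> hom C (ten C c (Uo d)) (ten C (Uo I) (Uo d))"
    using sm_tenm[OF C g idx] .
  have Ft: "Fm (tenm C g (idt C (Uo d))) \<in> hom D (Fo (ten C c (Uo d))) (Fo (ten C (Uo I) (Uo d)))"
    using Fh t .
  have et: "cmp D ev (tenm D (\<epsilon> I) (\<epsilon> d)) \<in> hom D (ten D (Fo (Uo I)) (Fo (Uo d))) e"
    using cat_comp[OF cD tee ev] .
  have W: "cmp D (cmp D ev (tenm D (\<epsilon> I) (\<epsilon> d))) (F2 (Uo I) (Uo d)) \<in> hom D (Fo (ten C (Uo I) (Uo d))) e"
    using cat_comp[OF cD F2' et] .
  have UW: "Um (cmp D (cmp D ev (tenm D (\<epsilon> I) (\<epsilon> d))) (F2 (Uo I) (Uo d)))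
       = cmp C (Um ev) (cmp C (Um (tenm D (\<epsilon> I) (\<epsilon> d))) (Um (F2 (Uo I) (Uo d))))"
    using fun_comp[OF Uf F2' et] fun_comp[OF Uf tee ev]
      cat_assoc[OF cC Uh[OF F2'] Uh[OF tee] Uh[OF ev]] by simp
  have UWh: "Um (cmp D (cmp D ev (tenm D (\<epsilon> I) (\<epsilon> d))) (F2 (Uo I) (Uo d))) \<in> hom C (Uo (Fo (ten C (Uo I) (Uo d)))) (Uo e)"
    using Uh W .
  have ect: "\<eta> (ten C c (Uo d)) \<in> hom C (ten C c (Uo d)) (Uo (Fo (ten C c (Uo d))))"
    using eta_hom Cten c x by blast
  have eIx: "\<eta> (ten C (Uo I) (Uo d)) \<in> hom C (ten C (Uo I) (Uo d)) (Uo (Fo (ten C (Uo I) (Uo d))))"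
    using eta_hom Cten x by blast
  have "cmp C (Um (cmp D (cmp D (cmp D ev (tenm D (\<epsilon> I) (\<epsilon> d))) (F2 (Uo I) (Uo d)))
           (Fm (tenm C g (idt C (Uo d)))))) (\<eta> (ten C c (Uo d)))
      = cmp C (Um (cmp D (cmp D ev (tenm D (\<epsilon> I) (\<epsilon> d))) (F2 (Uo I) (Uo d))))
          (cmp C (Um (Fm (tenm C g (idt C (Uo d))))) (\<eta> (ten C c (Uo d))))"
    using fun_comp[OF Uf Ft W] cat_assoc[OF cC ect Uh[OF Ft] UWh] by simp
  also have "\<dots> = cmp C (Um (cmp D (cmp D ev (tenm D (\<epsilon> I) (\<epsilon> d))) (F2 (Uo I) (Uo d))))
          (cmp C (\<eta> (ten C (Uo I) (Uo d))) (tenm C g (idt C (Uo d))))"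
    using eta_nat[OF t] by simp
  also have "\<dots> = cmp C (cmp C (Um (cmp D (cmp D ev (tenm D (\<epsilon> I) (\<epsilon> d))) (F2 (Uo I) (Uo d))))
          (\<eta> (ten C (Uo I) (Uo d)))) (tenm C g (idt C (Uo d)))"
    using cat_assoc[OF cC t eIx UWh] by simp
  also have "cmp C (Um (cmp D (cmp D ev (tenm D (\<epsilon> I) (\<epsilon> d))) (F2 (Uo I) (Uo d))))
          (\<eta> (ten C (Uo I) (Uo d))) = cmp C (Um ev) (m I d)"
    unfolding UW m_def
    using cat_assoc[OF cC eIx Uh[OF F2'] Uh[OF tee]]
      cat_assoc[OF cC eIx cat_comp[OF cC Uh[OF F2'] Uh[OF tee]] Uh[OF ev]]
      cat_assoc[OF cC cat_comp[OF cC eIx Uh[OF F2']] Uh[OF tee] Uh[OF ev]] by simp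
  finally show ?thesis .
qed

lemma psi_bij: assumes c: "c \<in> ob C" and e: "e \<in> ob D"
  shows "bij_betw (\<lambda>g. cmp D (\<epsilon> e) (Fm g)) (hom C c (Uo e)) (hom D (Fo c) e)"
    and "bij_betw (\<lambda>h. cmp C (Um h) (\<eta> c)) (hom D (Fo c) e) (hom C c (Uo e))"
proof -
  have ee: "\<epsilon> e \<in> hom D (Fo (Uo e)) e" using eps_hom e .
  have ec: "\<eta> c \<in> hom C c (Uo (Fo c))" using eta_hom c .
  have l: "\<forall>g\<in>hom C c (Uo e). cmp C (Um (cmp D (\<epsilon> e) (Fm g))) (\<eta> c) = g"
  proof
    fix g assume g: "g \<in> hom C c (Uo e)"
    have "cmp C (Um (cmp D (\<epsilon> e) (Fm g))) (\<eta> c) = cmp C (Um (\<epsilon> e)) (cmp C (Um (Fm g)) (\<eta> c))"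
      using fun_comp[OF Uf Fh[OF g] ee] cat_assoc[OF cC ec Uh[OF Fh[OF g]] Uh[OF ee]] by simp
    also have "\<dots> = cmp C (Um (\<epsilon> e)) (cmp C (\<eta> (Uo e)) g)" using eta_nat[OF g] by simp
    also have "\<dots> = g" using cat_assoc[OF cC g eta_hom[OF Uob[OF e]] Uh[OF ee]] tri2[OF e]
      cat_idl[OF cC g] by simp
    finally show "cmp C (Um (cmp D (\<epsilon> e) (Fm g))) (\<eta> c) = g" .
  qed
  have r: "\<forall>h\<in>hom D (Fo c) e. cmp D (\<epsilon> e) (Fm (cmp C (Um h) (\<eta> c))) = h"
  proof
    fix h assume h: "h \<in> hom D (Fo c) e"
    have "cmp D (\<epsilon> e) (Fm (cmp C (Um h) (\<eta> c))) = cmp D (cmp D (\<epsilon> e) (Fm (Um h))) (Fm (\<eta> c))"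
      using fun_comp[OF Ff ec Uh[OF h]] cat_assoc[OF cD Fh[OF ec] Fh[OF Uh[OF h]] ee] by simp
    also have "\<dots> = cmp D (cmp D h (\<epsilon> (Fo c))) (Fm (\<eta> c))" using eps_nat[OF h] by simp
    also have "\<dots> = h" using cat_assoc[OF cD Fh[OF ec] eps_hom[OF Fob[OF c]] h] tri1[OF c]
      cat_idr[OF cD h] by simp
    finally show "cmp D (\<epsilon> e) (Fm (cmp C (Um h) (\<eta> c))) = h" .
  qed
  have i1: "(\<lambda>g. cmp D (\<epsilon> e) (Fm g)) ` hom C c (Uo e) \<subseteq> hom D (Fo c) e"
    using Fh ee cat_comp[OF cD] by blast
  have i2: "(\<lambda>h. cmp C (Um h) (\<eta> c)) ` hom D (Fo c) e \<subseteq> hom C c (Uo e)"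
    using Uh ec cat_comp[OF cC] by blast
  show "bij_betw (\<lambda>g. cmp D (\<epsilon> e) (Fm g)) (hom C c (Uo e)) (hom D (Fo c) e)"
    by (rule bij_betw_byWitness[OF l r i1 i2])
  show "bij_betw (\<lambda>h. cmp C (Um h) (\<eta> c)) (hom D (Fo c) e) (hom C c (Uo e))"
    by (rule bij_betw_byWitness[OF r l i2 i1])
qed

end

locale cadj_lc = cadj +
  fixes ihC evC ihD evD
  assumes lcC: "left_closed C ihC evC" and lcD: "left_closed D ihD evD"
begin

definition kap where
  "kap X Y = (THE g. g \<in> hom C (Uo (ihD X Y)) (ihC (Uo X) (Uo Y)) \<and>
             cmp C (evC (Uo X) (Uo Y)) (tenm C g (idt C (Uo X))) =
             cmp C (Um (evD X Y)) (mon_str C D Uo U2 (ihD X Y) X))"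

lemma ihD_ob: "X \<in> ob D \<Longrightarrow> Y \<in> ob D \<Longrightarrow> ihD X Y \<in> ob D" using lcD unfolding left_closed_def by blast
lemma evD_hom: "X \<in> ob D \<Longrightarrow> Y \<in> ob D \<Longrightarrow> evD X Y \<in> hom D (ten D (ihD X Y) X) Y"
  using lcD unfolding left_closed_def by blast
lemma ihC_ob: "X \<in> ob C \<Longrightarrow> Y \<in> ob C \<Longrightarrow> ihC X Y \<in> ob C" using lcC unfolding left_closed_def by blast

lemma kap_prop: assumes X: "X \<in> ob D" and Y: "Y \<in> ob D"
  shows "kap X Y \<in> hom C (Uo (ihD X Y)) (ihC (Uo X) (Uo Y)) \<and>
         cmp C (evC (Uo X) (Uo Y)) (tenm C (kap X Y) (idt C (Uo X))) =
         cmp C (Um (evD X Y)) (m (ihD X Y) X)"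
proof -
  have I: "ihD X Y \<in> ob D" using ihD_ob X Y .
  have f: "cmp C (Um (evD X Y)) (m (ihD X Y) X) \<in> hom C (ten C (Uo (ihD X Y)) (Uo X)) (Uo Y)"
    using cat_comp[OF cC m_hom[OF I X] Uh[OF evD_hom[OF X Y]]] .
  have "\<exists>!g. g \<in> hom C (Uo (ihD X Y)) (ihC (Uo X) (Uo Y)) \<and>
             cmp C (evC (Uo X) (Uo Y)) (tenm C g (idt C (Uo X))) =
             cmp C (Um (evD X Y)) (m (ihD X Y) X)"
    using lcC f Uob[OF I] Uob[OF X] Uob[OF Y] unfolding left_closed_def by blast
  from theI'[OF this] show ?thesis unfolding kap_def mon_str_eq[OF I X] .
qed

lemma lcf_iff: "left_closed_functor C D Uo Um U2 ihC evC ihD evD \<longleftrightarrow>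
   (\<forall>X\<in>ob D. \<forall>Y\<in>ob D. iso_in C (Uo (ihD X Y)) (ihC (Uo X) (Uo Y)) (kap X Y))"
  unfolding left_closed_functor_def kap_def ..

lemma key:
  assumes c: "c \<in> ob C" and d: "d \<in> ob D" and e: "e \<in> ob D"
  shows "bij_betw (\<lambda>g. cmp C (kap d e) g) (hom C c (Uo (ihD d e))) (hom C c (ihC (Uo d) (Uo e)))
     \<longleftrightarrow> bij_betw (\<lambda>k. cmp D k (H c d)) (hom D (ten D (Fo c) d) e) (hom D (Fo (ten C c (Uo d))) e)"
proof -
  have I: "ihD d e \<in> ob D" using ihD_ob d e .
  have x: "Uo d \<in> ob C" "Uo e \<in> ob C" using Uob d e by auto
  have kp: "kap d e \<in> hom C (Uo (ihD d e)) (ihC (Uo d) (Uo e))"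
     "cmp C (evC (Uo d) (Uo e)) (tenm C (kap d e) (idt C (Uo d))) = cmp C (Um (evD d e)) (m (ihD d e) d)"
    using kap_prop[OF d e] by auto
  have ev: "evD d e \<in> hom D (ten D (ihD d e) d) e" using evD_hom d e .
  have idx: "idt C (Uo d) \<in> hom C (Uo d) (Uo d)" using cat_id[OF cC x(1)] .
  let ?P = "\<lambda>g. cmp C (kap d e) g"
  let ?Q = "\<lambda>k. cmp D k (H c d)"
  let ?ga = "\<lambda>g. cmp C (evC (Uo d) (Uo e)) (tenm C g (idt C (Uo d)))"
  let ?ph = "\<lambda>h. cmp C (Um h) (\<eta> (ten C c (Uo d)))"
  let ?be = "\<lambda>k. cmp D (evD d e) (tenm D k (idt D d))"
  let ?ps = "\<lambda>g. cmp D (\<epsilon> (ihD d e)) (Fm g)"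
  have bga: "bij_betw ?ga (hom C c (ihC (Uo d) (Uo e))) (hom C (ten C c (Uo d)) (Uo e))"
    using lc_bij[OF C lcC c x] .
  have bph: "bij_betw ?ph (hom D (Fo (ten C c (Uo d))) e) (hom C (ten C c (Uo d)) (Uo e))"
    using psi_bij(2)[OF Cten[OF c x(1)] e] .
  have bbe: "bij_betw ?be (hom D (Fo c) (ihD d e)) (hom D (ten D (Fo c) d) e)"
    using lc_bij[OF D lcD Fob[OF c] d e] .
  have bps: "bij_betw ?ps (hom C c (Uo (ihD d e))) (hom D (Fo c) (ihD d e))"
    using psi_bij(1)[OF c I] .
  have bbp: "bij_betw (?be \<circ> ?ps) (hom C c (Uo (ihD d e))) (hom D (ten D (Fo c) d) e)"
    using bij_betw_trans[OF bps bbe] .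
  have Pimg: "?P ` hom C c (Uo (ihD d e)) \<subseteq> hom C c (ihC (Uo d) (Uo e))"
    using kp(1) cat_comp[OF cC] by blast
  have Qimg: "?Q ` hom D (ten D (Fo c) d) e \<subseteq> hom D (Fo (ten C c (Uo d))) e"
    using H_hom[OF c d] cat_comp[OF cD] by blast
  have eq: "\<And>g. g \<in> hom C c (Uo (ihD d e)) \<Longrightarrow> (?ga \<circ> ?P) g = (?ph \<circ> ?Q \<circ> (?be \<circ> ?ps)) g"
  proof -
    fix g assume g: "g \<in> hom C c (Uo (ihD d e))"
    have "(?ga \<circ> ?P) g = cmp C (evC (Uo d) (Uo e)) (cmp C (tenm C (kap d e) (idt C (Uo d))) (tenm C g (idt C (Uo d))))"
      using sm_inter[OF C g kp(1) idx idx] cat_idl[OF cC idx] by simp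
    also have "\<dots> = cmp C (cmp C (Um (evD d e)) (m (ihD d e) d)) (tenm C g (idt C (Uo d)))"
      using cat_assoc[OF cC sm_tenm[OF C g idx] sm_tenm[OF C kp(1) idx]] kp(2) lcC x
      unfolding left_closed_def by (metis (no_types, lifting))
    also have "\<dots> = (?ph \<circ> ?Q \<circ> (?be \<circ> ?ps)) g"
      using Dpart[OF c d I ev g] Cpart[OF c d I ev g] by simp
    finally show "(?ga \<circ> ?P) g = (?ph \<circ> ?Q \<circ> (?be \<circ> ?ps)) g" .
  qed
  have "bij_betw ?P (hom C c (Uo (ihD d e))) (hom C c (ihC (Uo d) (Uo e)))
     \<longleftrightarrow> bij_betw (?ga \<circ> ?P) (hom C c (Uo (ihD d e))) (hom C (ten C c (Uo d)) (Uo e))"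
    using bij_betw_comp_iff2[OF bga Pimg] .
  also have "\<dots> \<longleftrightarrow> bij_betw (?ph \<circ> ?Q \<circ> (?be \<circ> ?ps)) (hom C c (Uo (ihD d e))) (hom C (ten C c (Uo d)) (Uo e))"
    using bij_betw_cong[of "hom C c (Uo (ihD d e))", OF eq] .
  also have "\<dots> \<longleftrightarrow> bij_betw (?ph \<circ> ?Q) (hom D (ten D (Fo c) d) e) (hom C (ten C c (Uo d)) (Uo e))"
    using bij_betw_comp_iff[OF bbp, of "?ph \<circ> ?Q"] by (simp only: o_assoc)
  also have "\<dots> \<longleftrightarrow> bij_betw ?Q (hom D (ten D (Fo c) d) e) (hom D (Fo (ten C c (Uo d))) e)"
    using bij_betw_comp_iff2[OF bph Qimg] by simp
  finally show ?thesis .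
qed

theorem left_main: "left_hopf C D Fo F2 Uo \<epsilon> \<longleftrightarrow> left_closed_functor C D Uo Um U2 ihC evC ihD evD"
proof -
  have "left_hopf C D Fo F2 Uo \<epsilon> \<longleftrightarrow> (\<forall>c\<in>ob C. \<forall>d\<in>ob D. \<forall>e\<in>ob D.
      bij_betw (\<lambda>k. cmp D k (H c d)) (hom D (ten D (Fo c) d) e) (hom D (Fo (ten C c (Uo d))) e))"
    unfolding left_hopf_def H_def[symmetric] using iso_pre[OF cD H_hom] by blast
  also have "\<dots> \<longleftrightarrow> (\<forall>c\<in>ob C. \<forall>d\<in>ob D. \<forall>e\<in>ob D.
      bij_betw (\<lambda>g. cmp C (kap d e) g) (hom C c (Uo (ihD d e))) (hom C c (ihC (Uo d) (Uo e))))"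
    using key by blast
  also have "\<dots> \<longleftrightarrow> (\<forall>X\<in>ob D. \<forall>Y\<in>ob D. iso_in C (Uo (ihD X Y)) (ihC (Uo X) (Uo Y)) (kap X Y))"
    using iso_post[OF cC] kap_prop by blast
  also have "\<dots> \<longleftrightarrow> left_closed_functor C D Uo Um U2 ihC evC ihD evD" using lcf_iff by simp
  finally show ?thesis .
qed

end

definition revc :: "('o, 'm) mcat \<Rightarrow> ('o, 'm) mcat" where
  "revc X = X\<lparr>ten := \<lambda>a b. ten X b a, tenm := \<lambda>f g. tenm X g f\<rparr>"

lemma revc_simps[simp]: "ob (revc X) = ob X" "hom (revc X) = hom X" "cmp (revc X) = cmp X"
  "idt (revc X) = idt X" "ten (revc X) a b = ten X b a" "tenm (revc X) f g = tenm X g f"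
  "munit (revc X) = munit X"
  unfolding revc_def by simp_all

lemma revc_cat[simp]: "category (revc X) = category X" unfolding category_def by simp
lemma revc_fun[simp]: "functor (revc X) (revc Y) Fo Fm = functor X Y Fo Fm" unfolding functor_def by simp
lemma revc_nt[simp]: "nat_trans (revc X) (revc Y) a b c d e = nat_trans X Y a b c d e"
  unfolding nat_trans_def by simp
lemma revc_iso[simp]: "iso_in (revc X) = iso_in X" unfolding iso_in_def[abs_def] by simp
lemma revc_inv[simp]: "inverse_arr (revc X) = inverse_arr X" unfolding inverse_arr_def[abs_def] by simp

lemma revc_sm: "strict_monoidal X \<Longrightarrow> strict_monoidal (revc X)"
  unfolding strict_monoidal_def by (simp; elim conjE; intro conjI; blast)

lemma revc_cf: "comonoidal_functor X Y Fo Fm F2 F0 \<Longrightarrow>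
   comonoidal_functor (revc X) (revc Y) Fo Fm (\<lambda>x y. F2 y x) F0"
  unfolding comonoidal_functor_def by (simp; elim conjE; intro conjI; blast)

lemma revc_adj: "comonoidal_adjunction C D Fo Fm F2 F0 Uo Um U2 U0 \<eta> \<epsilon> \<Longrightarrow>
  comonoidal_adjunction (revc C) (revc D) Fo Fm (\<lambda>x y. F2 y x) F0 Uo Um (\<lambda>x y. U2 y x) U0 \<eta> \<epsilon>"
  unfolding comonoidal_adjunction_def
  apply (elim conjE; intro conjI)
  apply (simp_all add: revc_sm revc_cf)
  unfolding comonoidal_nat_trans_def by (simp; blast)+

lemma revc_rc: "right_closed X ih ev = left_closed (revc X) ih ev"
  unfolding right_closed_def left_closed_def by simp
lemma revc_rh: "right_hopf C D Fo F2 Uo \<epsilon> = left_hopf (revc C) (revc D) Fo (\<lambda>x y. F2 y x) Uo \<epsilon>"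
  unfolding right_hopf_def left_hopf_def by simp
lemma revc_rcf: "right_closed_functor C D Uo Um U2 ihC evC ihD evD =
   left_closed_functor (revc C) (revc D) Uo Um (\<lambda>x y. U2 y x) ihC evC ihD evD"
  unfolding right_closed_functor_def left_closed_functor_def mon_str_def by simp

theorem mainTheorem5:
  fixes C :: "('a, 'b) mcat" and D :: "('c, 'd) mcat"
  assumes "comonoidal_adjunction C D Fo Fm F2 F0 Uo Um U2 U0 \<eta> \<epsilon>"
  shows "(left_closed C ihlC evlC \<and> left_closed D ihlD evlD \<longrightarrow>
            (left_hopf C D Fo F2 Uo \<epsilon> \<longleftrightarrow>
             left_closed_functor C D Uo Um U2 ihlC evlC ihlD evlD)) \<and>
         (right_closed C ihrC evrC \<and> right_closed D ihrD evrD \<longrightarrow>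
            (right_hopf C D Fo F2 Uo \<epsilon> \<longleftrightarrow>
             right_closed_functor C D Uo Um U2 ihrC evrC ihrD evrD))"
proof (intro conjI impI)
  assume "left_closed C ihlC evlC \<and> left_closed D ihlD evlD"
  then interpret cadj_lc C D Fo Fm F2 F0 Uo Um U2 U0 \<eta> \<epsilon> ihlC evlC ihlD evlD
    using assms by unfold_locales auto
  show "left_hopf C D Fo F2 Uo \<epsilon> \<longleftrightarrow> left_closed_functor C D Uo Um U2 ihlC evlC ihlD evlD"
    by (rule left_main)
next
  assume "right_closed C ihrC evrC \<and> right_closed D ihrD evrD"
  then interpret r: cadj_lc "revc C" "revc D" Fo Fm "\<lambda>x y. F2 y x" F0 Uo Um "\<lambda>x y. U2 y x" U0 \<eta> \<epsilon>
      ihrC evrC ihrD evrD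
    using revc_adj[OF assms] by unfold_locales (auto simp: revc_rc)
  show "right_hopf C D Fo F2 Uo \<epsilon> \<longleftrightarrow> right_closed_functor C D Uo Um U2 ihrC evrC ihrD evrD"
    unfolding revc_rh revc_rcf by (rule r.left_main)
qed

end
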